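(* Let $\mathcal F$ be a reward class, compact under $\|\cdot\|_{\infty,\mathrm{supp}(\pi_0)}$, with $\sup_{R\in\mathcal F}\|R\|_{\infty,\mathrm{supp}(\pi_0)}\le B$. Fix a truth reward $R^\star\in\mathcal F$, let $a^\star:=a_{R^\star}$ and $\mathcal G^\star(R):=\mathbb E_{X\sim d_0}[R^\star(X,a^\star(X))-R^\star(X,a_R(X))]$, and consider the greedy online loop described in the context with class $\mathcal F$ and truth $R^\star$. Fix $\varepsilon_0>0$ and let $\gamma>0$ be such that for every round $t\ge1$, every realized history up to time $t-1$, and every $R\in\mathcal F$ with $\mathcal G^\star(R)\ge\varepsilon_0$, \[ \mathbb E[\ell_t(R)-\ell_t(R^\star)\mid\mathscr H_{t-1}]\ge\gamma. \] Let $\ell_{\max}:=\log K+2B$, $N_\gamma:=\mathcal N(\mathcal F,\gamma/32,\|\cdot\|_{\infty,\mathrm{supp}(\pi_0)})$, $c_\gamma:=\gamma^2/(128\ell_{\max}^2)$. Then: (i) for every $t\ge1$, $\mathbb P(\mathcal G^\star(\widehat R_t)\ge\varepsilon_0)\le2N_\gamma e^{-c_\gamma t}$; (ii) with probability $1$, only finitely many $t$ satisfy $\mathcal G^\star(\widehat R_t)\ge\varepsilon_0$; (iii) with $N_{\varepsilon_0}(\infty):=\sum_{t=0}^\infty\mathbf 1\{\mathcal G^\star(\widehat R_t)\ge\varepsilon_0\}$, \[ \mathbb E[N_{\varepsilon_0}(\infty)]\le1+\Big\lceil\tfrac1{c_\gamma}\log(2N_\gamma)\Big\rceil+\frac1{e^{c_\gamma}-1}.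 \]
   Context: $\mathcal X$ is a measurable space with distribution $d_0$; $\mathcal A$ is a separable metric space; $\pi_0:\mathcal X\to\Delta(\mathcal A)$ a Markov kernel, $S_x:=\mathrm{supp}(\pi_0(\cdot\mid x))$ its topological support, $\|f\|_{\infty,\mathrm{supp}(\pi_0)}:=\sup\{|f(x,a)|:x\in\mathcal X,a\in S_x\}$. A fixed measurable tie-breaking rule assigns to each reward $R$ a measurable $a_R$ with $a_R(x)\in\arg\max_{a\in S_x}R(x,a)$. $K\ge2$; $\mathbf v_R(x,\mathbf a)=(R(x,a_1),\dots,R(x,a_K))$; $P_R(y=k\mid x,\mathbf a)=e^{R(x,a_k)}/\sum_\ell e^{R(x,a_\ell)}$; $\ell(\mathbf v,y)=\log\sum_ke^{v_k}-v_y$. $\mathcal N(\mathcal F,\varepsilon,\|\cdot\|)$ is the $\varepsilon$-covering number. Greedy loop with tilt $\eta>0$: $\pi_R(\cdot\mid x)$ has density $e^{\eta R(x,a)}/\int e^{\eta R(x,a')}\pi_0(da'\mid x)$ w.r.t. $\pi_0(\cdot\mid x)$. $\widehat R_0\equiv0$, $\pi_1=\pi_0$; for $t\ge1$: $x_t\sim d_0$ i.i.d.; $a_{t,1},\dots,a_{t,K}$ i.i.d. from $\pi_t(\cdot\mid x_t)$; $y_t\sim P_{R^\star}(\cdot\mid x_t,\mathbf a_t)$; $\widehat R_t\in\arg\min_{R\in\mathcal F}\frac1t\sum_{s=1}^t\ell(\mathbf v_R(x_s,\mathbf a_s),y_s)$ via a fixed measurable selection; $\pi_{t+1}=\pi_{\widehat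 R_t}$. $\mathscr H_t$ is the $\sigma$-algebra generated by the first $t$ rounds and $\ell_t(R):=\ell(\mathbf v_R(x_t,\mathbf a_t),y_t)$. *)

theory Defs
  imports "HOL-Probability.Probability"
begin

definition supp_pi0 :: "('x \<Rightarrow> 'a::topological_space measure) \<Rightarrow> 'x \<Rightarrow> 'a set" where
  "supp_pi0 pi0 x = {a. \<forall>U. open U \<and> a \<in> U \<longrightarrow> emeasure (pi0 x) U > 0}"

text \<open>\<open>|f| <= c\<close> on supp(pi0), i.e. \<open>||f||_{\<infinity>,supp(pi0)} <= c\<close> (sup over x in the space of d0).\<close>
definition supp_le :: "'x measure \<Rightarrow> ('x \<Rightarrow> 'a::topological_space measure) \<Rightarrow>
    ('x \<Rightarrow> 'a \<Rightarrow> real) \<Rightarrow> real \<Rightarrow> bool" where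
  "supp_le d0 pi0 f c \<longleftrightarrow> (\<forall>x\<in>space d0. \<forall>a\<in>supp_pi0 pi0 x. \<bar>f x a\<bar> \<le> c)"

text \<open>Compactness of a reward class w.r.t. the (pseudo)norm \<open>||.||_{\<infinity>,supp(pi0)}\<close>,
  in its sequential form (equivalent to compactness for pseudometrics).\<close>
definition supp_compact :: "'x measure \<Rightarrow> ('x \<Rightarrow> 'a::topological_space measure) \<Rightarrow>
    ('x \<Rightarrow> 'a \<Rightarrow> real) set \<Rightarrow> bool" where
  "supp_compact d0 pi0 F \<longleftrightarrow>
     (\<forall>f::nat \<Rightarrow> ('x \<Rightarrow> 'a \<Rightarrow> real). (\<forall>n. f n \<in> F) \<longrightarrow>
        (\<exists>R\<in>F. \<exists>r::nat \<Rightarrow> nat. strict_mono r \<and>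
           (\<forall>\<epsilon>>0. \<exists>N. \<forall>n\<ge>N. supp_le d0 pi0 (\<lambda>x a. f (r n) x a - R x a) \<epsilon>)))"

definition covering_number :: "'x measure \<Rightarrow> ('x \<Rightarrow> 'a::topological_space measure) \<Rightarrow>
    ('x \<Rightarrow> 'a \<Rightarrow> real) set \<Rightarrow> real \<Rightarrow> nat" where
  "covering_number d0 pi0 F \<epsilon> =
     (LEAST n. \<exists>C. finite C \<and> card C = n \<and>
        (\<forall>R\<in>F. \<exists>c\<in>C. supp_le d0 pi0 (\<lambda>x a. R x a - c x a) \<epsilon>))"

definition tie_break_rule :: "'x measure \<Rightarrow> ('x \<Rightarrow> 'a::topological_space measure) \<Rightarrow>
    ('x \<Rightarrow> 'a \<Rightarrow> real) set \<Rightarrow> (('x \<Rightarrow> 'a \<Rightarrow> real) \<Rightarrow> 'x \<Rightarrow> 'a) \<Rightarrow> bool" where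
  "tie_break_rule d0 pi0 F aR \<longleftrightarrow>
     (\<forall>R\<in>F. aR R \<in> d0 \<rightarrow>\<^sub>M borel \<and>
        (\<forall>x\<in>space d0. aR R x \<in> supp_pi0 pi0 x \<and>
           (\<forall>a\<in>supp_pi0 pi0 x. R x a \<le> R x (aR R x))))"

definition gap :: "'x measure \<Rightarrow> (('x \<Rightarrow> 'a \<Rightarrow> real) \<Rightarrow> 'x \<Rightarrow> 'a) \<Rightarrow>
    ('x \<Rightarrow> 'a \<Rightarrow> real) \<Rightarrow> ('x \<Rightarrow> 'a \<Rightarrow> real) \<Rightarrow> real" where
  "gap d0 aR Rs R = (\<integral>x. Rs x (aR Rs x) - Rs x (aR R x) \<partial>d0)"

definition tilt :: "real \<Rightarrow> ('x \<Rightarrow> 'a measure) \<Rightarrow> ('x \<Rightarrow> 'a \<Rightarrow> real) \<Rightarrow> 'x \<Rightarrow> 'a measure" where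
  "tilt \<eta> pi0 R x =
     density (pi0 x) (\<lambda>a. ennreal (exp (\<eta> * R x a) / (\<integral>a'. exp (\<eta> * R x a') \<partial>pi0 x)))"

text \<open>Multinomial-logit choice probability \<open>P_R(y = k | x, a)\<close>, indices \<open>0..K-1\<close>.\<close>
definition choice_prob :: "nat \<Rightarrow> ('x \<Rightarrow> 'a \<Rightarrow> real) \<Rightarrow> 'x \<Rightarrow> (nat \<Rightarrow> 'a) \<Rightarrow> nat \<Rightarrow> real" where
  "choice_prob K R x a k = exp (R x (a k)) / (\<Sum>l<K. exp (R x (a l)))"

definition mloss :: "nat \<Rightarrow> ('x \<Rightarrow> 'a \<Rightarrow> real) \<Rightarrow> 'x \<Rightarrow> (nat \<Rightarrow> 'a) \<Rightarrow> nat \<Rightarrow> real" where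
  "mloss K R x a y = ln (\<Sum>k<K. exp (R x (a k))) - R x (a y)"

definition obsM :: "nat \<Rightarrow> 'x measure \<Rightarrow> ('x \<times> (nat \<Rightarrow> 'a::topological_space) \<times> nat) measure" where
  "obsM K d0 = d0 \<Otimes>\<^sub>M (PiM {..<K} (\<lambda>_. borel) \<Otimes>\<^sub>M count_space {..<K})"

definition hist :: "'w measure \<Rightarrow> nat \<Rightarrow> 'x measure \<Rightarrow> (nat \<Rightarrow> 'w \<Rightarrow> 'x) \<Rightarrow>
    (nat \<Rightarrow> 'w \<Rightarrow> nat \<Rightarrow> 'a::topological_space) \<Rightarrow> (nat \<Rightarrow> 'w \<Rightarrow> nat) \<Rightarrow> nat \<Rightarrow> 'w measure" where
  "hist M K d0 X A Y t =
     sigma (space M)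
       (\<Union>s\<in>{1..t}. {(\<lambda>\<omega>. (X s \<omega>, A s \<omega>, Y s \<omega>)) -` E \<inter> space M | E. E \<in> sets (obsM K d0)})"

text \<open>Law of one round when the current policy is \<open>pi_{R'}\<close>:
  \<open>x ~ d0\<close>, \<open>a_1..a_K\<close> i.i.d. from \<open>pi_{R'}(.|x)\<close>, \<open>y ~ P_{R*}(.|x,a)\<close>.\<close>
definition step_law :: "nat \<Rightarrow> real \<Rightarrow> 'x measure \<Rightarrow> ('x \<Rightarrow> 'a measure) \<Rightarrow>
    ('x \<Rightarrow> 'a \<Rightarrow> real) \<Rightarrow> ('x \<Rightarrow> 'a \<Rightarrow> real) \<Rightarrow> ('x \<times> (nat \<Rightarrow> 'a) \<times> nat) set \<Rightarrow> ennreal" where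
  "step_law K \<eta> d0 pi0 Rs R' E =
     (\<integral>\<^sup>+x. (\<integral>\<^sup>+a. (\<Sum>y<K. ennreal (choice_prob K Rs x a y) * indicator E (x, a, y))
              \<partial>(PiM {..<K} (\<lambda>_. tilt \<eta> pi0 R' x))) \<partial>d0)"

definition round_loss :: "nat \<Rightarrow> (nat \<Rightarrow> 'w \<Rightarrow> 'x) \<Rightarrow> (nat \<Rightarrow> 'w \<Rightarrow> nat \<Rightarrow> 'a) \<Rightarrow>
    (nat \<Rightarrow> 'w \<Rightarrow> nat) \<Rightarrow> nat \<Rightarrow> ('x \<Rightarrow> 'a \<Rightarrow> real) \<Rightarrow> 'w \<Rightarrow> real" where
  "round_loss K X A Y t R \<omega> = mloss K R (X t \<omega>) (A t \<omega>) (Y t \<omega>)"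

text \<open>The greedy online loop with class F, truth Rs, tilt \<open>\<eta>\<close>, realised on the
  probability space M by observations X, A, Y (rounds t >= 1) and estimates Rh.\<close>
definition greedy_loop :: "'w measure \<Rightarrow> nat \<Rightarrow> real \<Rightarrow> 'x measure \<Rightarrow> ('x \<Rightarrow> 'a::topological_space measure) \<Rightarrow>
    ('x \<Rightarrow> 'a \<Rightarrow> real) set \<Rightarrow> ('x \<Rightarrow> 'a \<Rightarrow> real) \<Rightarrow>
    (nat \<Rightarrow> 'w \<Rightarrow> 'x) \<Rightarrow> (nat \<Rightarrow> 'w \<Rightarrow> nat \<Rightarrow> 'a) \<Rightarrow> (nat \<Rightarrow> 'w \<Rightarrow> nat) \<Rightarrow>
    (nat \<Rightarrow> 'w \<Rightarrow> ('x \<Rightarrow> 'a \<Rightarrow> real)) \<Rightarrow> bool" where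
  "greedy_loop M K \<eta> d0 pi0 F Rs X A Y Rh \<longleftrightarrow>
     prob_space M \<and>
     (\<forall>t\<ge>1. X t \<in> M \<rightarrow>\<^sub>M d0 \<and> A t \<in> M \<rightarrow>\<^sub>M PiM {..<K} (\<lambda>_. borel) \<and>
             Y t \<in> M \<rightarrow>\<^sub>M count_space {..<K}) \<and>
     \<comment> \<open>conditional law of round t given \<open>\<H>_{t-1}\<close>: policy \<open>pi_t = pi_{Rh_{t-1}}\<close>\<close>
     (\<forall>t\<ge>1. \<forall>H\<in>sets (hist M K d0 X A Y (t - 1)). \<forall>E\<in>sets (obsM K d0).
        emeasure M (H \<inter> {\<omega>\<in>space M. (X t \<omega>, A t \<omega>, Y t \<omega>) \<in> E})
          = (\<integral>\<^sup>+\<omega>\<in>H. step_law K \<eta> d0 pi0 Rs (Rh (t - 1) \<omega>) E \<partial>M)) \<and>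
     \<comment> \<open>\<open>Rh_0 = 0\<close>\<close>
     (\<forall>\<omega>\<in>space M. Rh 0 \<omega> = (\<lambda>x a. 0)) \<and>
     \<comment> \<open>\<open>Rh_t\<close>: empirical risk minimiser over F, a measurable function of the history\<close>
     (\<forall>t\<ge>1. \<forall>\<omega>\<in>space M. Rh t \<omega> \<in> F \<and>
        (\<forall>R\<in>F. (1 / real t) * (\<Sum>s\<in>{1..t}. round_loss K X A Y s (Rh t \<omega>) \<omega>)
                 \<le> (1 / real t) * (\<Sum>s\<in>{1..t}. round_loss K X A Y s R \<omega>))) \<and>
     (\<forall>t. (\<lambda>(\<omega>, x, a). Rh t \<omega> x a)
            \<in> borel_measurable (hist M K d0 X A Y t \<Otimes>\<^sub>M (d0 \<Otimes>\<^sub>M borel)))"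

end

theory Submission
  imports Defs
begin

lemma supp_le_trans:
  assumes "supp_le d0 pi0 (\<lambda>x a. f x a - g x a) e1" "supp_le d0 pi0 (\<lambda>x a. g x a - h x a) e2"
  shows "supp_le d0 pi0 (\<lambda>x a. f x a - h x a) (e1 + e2)"
  using assms unfolding supp_le_def
  by (smt (verit, best))

lemma supp_le_sym:
  assumes "supp_le d0 pi0 (\<lambda>x a. f x a - g x a) e"
  shows "supp_le d0 pi0 (\<lambda>x a. g x a - f x a) e"
  using assms unfolding supp_le_def by (smt (verit, best))

primrec seqL :: "('b set \<Rightarrow> 'b) \<Rightarrow> nat \<Rightarrow> 'b list" where
  "seqL s 0 = []" | "seqL s (Suc n) = s (set (seqL s n)) # seqL s n"

lemma set_seqL: "set (seqL s n) = (\<lambda>m. s (set (seqL s m))) ` {..<n}"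
  by (induction n) (auto simp: lessThan_Suc)

lemma totally_bounded_supp:
  assumes comp: "supp_compact d0 pi0 F" and e: "e > 0"
  shows "\<exists>C. finite C \<and> (\<forall>R\<in>F. \<exists>c\<in>C. supp_le d0 pi0 (\<lambda>x a. R x a - c x a) e)"
proof (rule ccontr)
  assume nc: "\<not> ?thesis"
  have ex: "\<exists>R. R \<in> F \<and> (\<forall>c\<in>C. \<not> supp_le d0 pi0 (\<lambda>x a. R x a - c x a) e)" if "finite C" for C
  proof -
    have "\<forall>C. \<not> (finite C \<and> (\<forall>R\<in>F. \<exists>c\<in>C. supp_le d0 pi0 (\<lambda>x a. R x a - c x a) e))"
      by (rule allI, rule notI, rule notE[OF nc], rule exI, assumption)
    then have "\<not> (\<forall>R\<in>F. \<exists>c\<in>C. supp_le d0 pi0 (\<lambda>x a. R x a - c x a) e)"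
      using that by (meson)
    then show ?thesis by (simp only: Ball_def Bex_def not_all not_imp not_ex) blast
  qed
  define sel where "sel C = (SOME R. R \<in> F \<and> (\<forall>c\<in>C. \<not> supp_le d0 pi0 (\<lambda>x a. R x a - c x a) e))" for C
  have sel: "sel C \<in> F \<and> (\<forall>c\<in>C. \<not> supp_le d0 pi0 (\<lambda>x a. sel C x a - c x a) e)" if "finite C" for C
    unfolding sel_def by (rule someI_ex[OF ex[OF that]])
  define f where "f n = sel (set (seqL sel n))" for n
  have fF: "f n \<in> F" for n unfolding f_def using sel[of "set (seqL sel n)"] by simp
  have fsep: "\<not> supp_le d0 pi0 (\<lambda>x a. f n x a - f m x a) e" if "m < n" for m n
  proof -
    have "set (seqL sel n) = f ` {..<n}" unfolding f_def by (rule set_seqL)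
    then have "f m \<in> set (seqL sel n)" using that by auto
    moreover have "\<forall>c\<in>set (seqL sel n). \<not> supp_le d0 pi0 (\<lambda>x a. f n x a - c x a) e"
      unfolding f_def[of n] using sel[of "set (seqL sel n)"] by simp
    ultimately show ?thesis by blast
  qed
  have "\<exists>R\<in>F. \<exists>r::nat \<Rightarrow> nat. strict_mono r \<and>
           (\<forall>\<epsilon>>0. \<exists>N. \<forall>n\<ge>N. supp_le d0 pi0 (\<lambda>x a. f (r n) x a - R x a) \<epsilon>)"
  proof -
    have "(\<forall>n. f n \<in> F) \<longrightarrow> (\<exists>R\<in>F. \<exists>r::nat \<Rightarrow> nat. strict_mono r \<and>
           (\<forall>\<epsilon>>0. \<exists>N. \<forall>n\<ge>N. supp_le d0 pi0 (\<lambda>x a. f (r n) x a - R x a) \<epsilon>))"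
      using comp unfolding supp_compact_def by (rule spec[where x=f])
    then show ?thesis using fF by blast
  qed
  then obtain R and r :: "nat \<Rightarrow> nat" where R: "R \<in> F" "strict_mono r"
    and conv: "\<forall>\<epsilon>>0. \<exists>N. \<forall>n\<ge>N. supp_le d0 pi0 (\<lambda>x a. f (r n) x a - R x a) \<epsilon>"
    by auto
  have "e/2 > 0" using e by simp
  then obtain N where N: "\<forall>n\<ge>N. supp_le d0 pi0 (\<lambda>x a. f (r n) x a - R x a) (e/2)"
    using conv by blast
  have "supp_le d0 pi0 (\<lambda>x a. f (r (Suc N)) x a - f (r N) x a) (e/2 + e/2)"
    by (rule supp_le_trans[OF N[rule_format, of "Suc N"] supp_le_sym[OF N[rule_format, of N]]]) auto
  moreover have "r N < r (Suc N)" using R(2) by (simp add: strict_mono_def)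
  ultimately show False using fsep by auto
qed

lemma covering_exists:
  assumes comp: "supp_compact d0 pi0 F" and e: "e > 0"
  shows "\<exists>C. finite C \<and> card C = covering_number d0 pi0 F e \<and>
           (\<forall>R\<in>F. \<exists>c\<in>C. supp_le d0 pi0 (\<lambda>x a. R x a - c x a) e)"
proof -
  obtain C where "finite C" "\<forall>R\<in>F. \<exists>c\<in>C. supp_le d0 pi0 (\<lambda>x a. R x a - c x a) e"
    using totally_bounded_supp[OF assms] by blast
  then have "\<exists>n. \<exists>C. finite C \<and> card C = n \<and> (\<forall>R\<in>F. \<exists>c\<in>C. supp_le d0 pi0 (\<lambda>x a. R x a - c x a) e)"
    by blast
  from LeastI_ex[OF this] show ?thesis unfolding covering_number_def .
qed

lemma lse_mono:
  fixes u v :: "nat \<Rightarrow> real"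
  assumes K: "K \<ge> 1" and le: "\<And>k. k < K \<Longrightarrow> u k \<le> v k + d"
  shows "ln (\<Sum>k<K. exp (u k)) \<le> ln (\<Sum>k<K. exp (v k)) + d"
proof -
  have ne: "{..<K} \<noteq> {}" using K by (auto simp: lessThan_empty_iff)
  have pos: "(\<Sum>k<K. exp (v k)) > 0" using ne by (intro sum_pos) auto
  have pos2: "(\<Sum>k<K. exp (u k)) > 0" using ne by (intro sum_pos) auto
  have "(\<Sum>k<K. exp (u k)) \<le> (\<Sum>k<K. exp d * exp (v k))"
    using le by (intro sum_mono) (auto simp flip: exp_add simp: add.commute)
  also have "\<dots> = exp d * (\<Sum>k<K. exp (v k))" by (simp add: sum_distrib_left)
  finally have "ln (\<Sum>k<K. exp (u k)) \<le> ln (exp d * (\<Sum>k<K. exp (v k)))"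
    using pos2 by (subst ln_le_cancel_iff) (auto intro: mult_pos_pos pos)
  also have "\<dots> = d + ln (\<Sum>k<K. exp (v k))" using pos by (simp add: ln_mult)
  finally show ?thesis by simp
qed

lemma mloss_bounds:
  assumes x: "x \<in> space d0" and y: "y < K" and a: "\<forall>k<K. a k \<in> supp_pi0 pi0 x"
    and RB: "supp_le d0 pi0 R B"
  shows "0 \<le> mloss K R x a y" "mloss K R x a y \<le> ln (real K) + 2 * B"
proof -
  have b: "\<bar>R x (a k)\<bar> \<le> B" if "k < K" for k using RB x a that unfolding supp_le_def by blast
  have K1: "K \<ge> 1" using y by simp
  have "exp (R x (a y)) \<le> (\<Sum>k<K. exp (R x (a k)))"
    using y by (intro member_le_sum) auto
  then have "R x (a y) \<le> ln (\<Sum>k<K. exp (R x (a k)))"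
    by (metis exp_gt_zero ln_exp ln_le_cancel_iff order_less_le_trans)
  then show "0 \<le> mloss K R x a y" unfolding mloss_def by simp
  have "ln (\<Sum>k<K. exp (R x (a k))) \<le> ln (\<Sum>k<K. exp 0) + B"
    using b K1 by (intro lse_mono) (auto simp: abs_le_iff)
  then have "ln (\<Sum>k<K. exp (R x (a k))) \<le> ln (real K) + B" by simp
  moreover have "- R x (a y) \<le> B" using b[OF y] by simp
  ultimately show "mloss K R x a y \<le> ln (real K) + 2 * B" unfolding mloss_def by simp
qed

lemma mloss_lip:
  assumes x: "x \<in> space d0" and y: "y < K" and a: "\<forall>k<K. a k \<in> supp_pi0 pi0 x"
    and RR: "supp_le d0 pi0 (\<lambda>x a. R x a - R' x a) d"
  shows "mloss K R x a y \<le> mloss K R' x a y + 2 * d"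
proof -
  have b: "\<bar>R x (a k) - R' x (a k)\<bar> \<le> d" if "k < K" for k using RR x a that unfolding supp_le_def by blast
  have K1: "K \<ge> 1" using y by simp
  have "ln (\<Sum>k<K. exp (R x (a k))) \<le> ln (\<Sum>k<K. exp (R' x (a k))) + d"
    using b K1 by (intro lse_mono) (force simp: abs_le_iff)+
  moreover have "- R x (a y) \<le> - R' x (a y) + d" using b[OF y] by simp
  ultimately show ?thesis unfolding mloss_def by simp
qed

locale gl =
  fixes M :: "'w measure"
    and d0 :: "'x measure"
    and pi0 :: "'x \<Rightarrow> 'a::{metric_space, second_countable_topology} measure"
    and F :: "('x \<Rightarrow> 'a \<Rightarrow> real) set"
    and aR :: "('x \<Rightarrow> 'a \<Rightarrow> real) \<Rightarrow> 'x \<Rightarrow> 'a"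
    and Rs :: "'x \<Rightarrow> 'a \<Rightarrow> real"
    and K :: nat and \<eta> B \<epsilon>0 \<gamma> :: real
    and X :: "nat \<Rightarrow> 'w \<Rightarrow> 'x" and A :: "nat \<Rightarrow> 'w \<Rightarrow> nat \<Rightarrow> 'a" and Y :: "nat \<Rightarrow> 'w \<Rightarrow> nat"
    and Rh :: "nat \<Rightarrow> 'w \<Rightarrow> ('x \<Rightarrow> 'a \<Rightarrow> real)"
  assumes d0: "prob_space d0"
    and pi0_kernel: "pi0 \<in> d0 \<rightarrow>\<^sub>M prob_algebra borel"
    and K: "K \<ge> 2" and eta: "\<eta> > 0"
    and F_meas: "\<forall>R\<in>F. (\<lambda>(x, a). R x a) \<in> borel_measurable (d0 \<Otimes>\<^sub>M borel)"
    and F_compact: "supp_compact d0 pi0 F"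
    and F_bounded: "\<forall>R\<in>F. supp_le d0 pi0 R B"
    and tie: "tie_break_rule d0 pi0 F aR"
    and Rs_in: "Rs \<in> F"
    and loop: "greedy_loop M K \<eta> d0 pi0 F Rs X A Y Rh"
    and eps0: "\<epsilon>0 > 0" and gamma: "\<gamma> > 0"
    and margin: "\<forall>t\<ge>1. \<forall>R\<in>F. gap d0 aR Rs R \<ge> \<epsilon>0 \<longrightarrow>
        (AE \<omega> in M. real_cond_exp M (hist M K d0 X A Y (t - 1))
             (\<lambda>\<omega>. round_loss K X A Y t R \<omega> - round_loss K X A Y t Rs \<omega>) \<omega> \<ge> \<gamma>)"
begin

abbreviation "H t \<equiv> hist M K d0 X A Y t"
definition "obs s \<omega> = (X s \<omega>, A s \<omega>, Y s \<omega>)"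
definition "Gen t = (\<Union>s\<in>{1..t}. {(\<lambda>\<omega>. (X s \<omega>, A s \<omega>, Y s \<omega>)) -` E \<inter> space M | E. E \<in> sets (obsM K d0)})"

lemma PM: "prob_space M" using loop unfolding greedy_loop_def by blast

lemma Xm: "s \<ge> 1 \<Longrightarrow> X s \<in> M \<rightarrow>\<^sub>M d0" using loop unfolding greedy_loop_def by blast
lemma Am: "s \<ge> 1 \<Longrightarrow> A s \<in> M \<rightarrow>\<^sub>M PiM {..<K} (\<lambda>_. borel)" using loop unfolding greedy_loop_def by blast
lemma Ym: "s \<ge> 1 \<Longrightarrow> Y s \<in> M \<rightarrow>\<^sub>M count_space {..<K}" using loop unfolding greedy_loop_def by blast

lemma obs_meas: "s \<ge> 1 \<Longrightarrow> obs s \<in> M \<rightarrow>\<^sub>M obsM K d0"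
  unfolding obs_def obsM_def using Xm Am Ym by (intro measurable_Pair) auto

lemma Gen_sub: "Gen t \<subseteq> sets M"
proof
  fix S assume "S \<in> Gen t"
  then obtain s E where s: "s \<in> {1..t}" and E: "E \<in> sets (obsM K d0)"
    and S: "S = obs s -` E \<inter> space M" unfolding Gen_def obs_def by blast
  show "S \<in> sets M" unfolding S using measurable_sets[OF obs_meas E] s by auto
qed

lemma Gen_pow: "Gen t \<subseteq> Pow (space M)" using Gen_sub sets.sets_into_space by blast

lemma H_eq: "H t = sigma (space M) (Gen t)" unfolding hist_def Gen_def by simp

lemma sets_H: "sets (H t) = sigma_sets (space M) (Gen t)"
  unfolding H_eq using Gen_pow by (simp add: sets_measure_of)

lemma space_H: "space (H t) = space M"
  unfolding H_eq by (simp add: space_measure_of_conv)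

lemma subalg_H: "subalgebra M (H t)"
  unfolding subalgebra_def sets_H space_H using sets.sigma_sets_subset[OF Gen_sub] by simp

lemma sfs_H: "sigma_finite_subalgebra M (H t)"
proof -
  interpret prob_space M by (rule PM)
  have "finite_measure_subalgebra M (H t)"
    by unfold_locales (rule subalg_H)
  then show ?thesis by (rule finite_measure_subalgebra_is_sigma_finite)
qed

lemma H_mono: "t \<le> t' \<Longrightarrow> sets (H t) \<subseteq> sets (H t')"
  unfolding sets_H Gen_def by (rule sigma_sets_mono', rule UN_mono) auto

lemma obs_meas_H: "1 \<le> s \<Longrightarrow> s \<le> t \<Longrightarrow> obs s \<in> H t \<rightarrow>\<^sub>M obsM K d0"
proof (rule measurableI)
  assume s: "1 \<le> s" "s \<le> t"
  fix \<omega> assume "\<omega> \<in> space (H t)"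
  then have "\<omega> \<in> space M" by (simp only: space_H)
  then show "obs s \<omega> \<in> space (obsM K d0)" by (rule measurable_space[OF obs_meas[OF s(1)]])
next
  assume s: "1 \<le> s" "s \<le> t"
  fix E :: "('x \<times> (nat \<Rightarrow> 'a) \<times> nat) set" assume E: "E \<in> sets (obsM K d0)"
  have "obs s -` E \<inter> space M \<in> Gen t" unfolding Gen_def obs_def
    apply (rule UN_I[of s])
    using s apply simp
    using E apply blast
    done
  then show "obs s -` E \<inter> space (H t) \<in> sets (H t)" unfolding sets_H space_H by (rule sigma_sets.Basic)
qed

lemma space_in_H: "space M \<in> sets (H t)"
  using sets.top[of "H t"] space_H by simp

end

context gl begin

definition "Bs = (SOME B::'a set set. countable B \<and> topological_basis B)"

lemma Bs: "countable Bs" "topological_basis Bs"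
  using someI_ex[OF ex_countable_basis[where 'a='a]] unfolding Bs_def by auto

lemma pi0_x: assumes "x \<in> space d0" shows "prob_space (pi0 x)" "sets (pi0 x) = sets borel"
  using measurable_space[OF pi0_kernel assms] unfolding space_prob_algebra by auto

definition "NS x = (\<Union>U\<in>{U\<in>Bs. emeasure (pi0 x) U = 0}. U)"

lemma supp_iff: assumes x: "x \<in> space d0" shows "a \<in> supp_pi0 pi0 x \<longleftrightarrow> a \<notin> NS x"
proof
  assume a: "a \<in> supp_pi0 pi0 x"
  show "a \<notin> NS x"
  proof
    assume "a \<in> NS x"
    then obtain U where U: "U \<in> Bs" "emeasure (pi0 x) U = 0" "a \<in> U" unfolding NS_def by blast
    have "open U" using Bs(2) U(1) by (rule topological_basis_open)
    then have "emeasure (pi0 x) U > 0" using a U(3) unfolding supp_pi0_def by blast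
    then show False using U(2) by simp
  qed
next
  assume a: "a \<notin> NS x"
  show "a \<in> supp_pi0 pi0 x" unfolding supp_pi0_def
  proof (intro CollectI allI impI)
    fix U :: "'a set" assume U: "open U \<and> a \<in> U"
    obtain V where V: "V \<in> Bs" "a \<in> V" "V \<subseteq> U"
      using topological_basisE[OF Bs(2)] U by metis
    have "open V" using Bs(2) V(1) by (rule topological_basis_open)
    have "emeasure (pi0 x) V \<noteq> 0" using a V unfolding NS_def by blast
    moreover have "emeasure (pi0 x) V \<le> emeasure (pi0 x) U"
      using pi0_x(2)[OF x] U \<open>open V\<close> V(3) by (intro emeasure_mono) auto
    ultimately show "emeasure (pi0 x) U > 0"
      by (metis not_gr_zero order_le_less_trans order.not_eq_order_implies_strict zero_le)
  qed
qed

lemma AE_NS: assumes x: "x \<in> space d0" shows "AE a in pi0 x. a \<notin> NS x"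
proof -
  have cnt: "countable {U\<in>Bs. emeasure (pi0 x) U = 0}" using Bs(1) by simp
  have "AE a in pi0 x. \<forall>U\<in>{U\<in>Bs. emeasure (pi0 x) U = 0}. a \<notin> U"
  proof (rule AE_ball_countable'[OF _ cnt])
    fix U assume U: "U \<in> {U\<in>Bs. emeasure (pi0 x) U = 0}"
    have "open U" using Bs(2) U by (auto intro: topological_basis_open)
    then have "U \<in> sets (pi0 x)" using pi0_x(2)[OF x] by simp
    then have "U \<in> null_sets (pi0 x)" using U by (intro null_setsI) auto
    then show "AE a in pi0 x. a \<notin> U" by (rule AE_I') auto
  qed
  then show ?thesis unfolding NS_def by auto
qed

lemma B_nonneg: "B \<ge> 0"
proof -
  interpret D: prob_space d0 by (rule d0)
  obtain x where x: "x \<in> space d0" using D.not_empty by blast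
  interpret P: prob_space "pi0 x" by (rule pi0_x(1)[OF x])
  have "\<exists>a. a \<notin> NS x"
  proof (rule ccontr)
    assume "\<not> (\<exists>a. a \<notin> NS x)"
    then have "\<forall>a. a \<in> NS x" by blast
    then have "AE a in pi0 x. False" using AE_NS[OF x] by simp
    then show False by simp
  qed
  then obtain a where "a \<notin> NS x" by blast
  then have "a \<in> supp_pi0 pi0 x" using supp_iff[OF x] by simp
  then show ?thesis using F_bounded Rs_in x unfolding supp_le_def by (meson abs_ge_zero order_trans)
qed

lemma tilt_facts:
  assumes x: "x \<in> space d0" and Rm: "(\<lambda>a. R x a) \<in> borel_measurable borel"
    and Rb: "\<forall>a\<in>supp_pi0 pi0 x. \<bar>R x a\<bar> \<le> B"
  shows "prob_space (tilt \<eta> pi0 R x)" "AE a in tilt \<eta> pi0 R x. a \<notin> NS x"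
proof -
  interpret P: prob_space "pi0 x" by (rule pi0_x(1)[OF x])
  define f where "f a = exp (\<eta> * R x a)" for a
  define Z where "Z = (\<integral>a. f a \<partial>pi0 x)"
  have Rm': "(\<lambda>a. R x a) \<in> borel_measurable (pi0 x)"
    using Rm by (subst measurable_cong_sets[OF pi0_x(2)[OF x] refl])
  have fm: "f \<in> borel_measurable (pi0 x)" unfolding f_def using Rm' by measurable
  have aeB: "AE a in pi0 x. \<bar>R x a\<bar> \<le> B"
    using AE_NS[OF x]
  proof eventually_elim
    case (elim a)
    then have "a \<in> supp_pi0 pi0 x" using supp_iff[OF x] by simp
    then show ?case using Rb by blast
  qed
  have aef: "AE a in pi0 x. norm (f a) \<le> exp (\<eta> * B)"
    using aeB by eventually_elim (use eta in \<open>auto simp: f_def abs_le_iff\<close>)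
  have fi: "integrable (pi0 x) f" by (rule P.integrable_const_bound[OF aef fm])
  have "(\<integral>a. exp (- \<eta> * B) \<partial>pi0 x) \<le> Z" unfolding Z_def
  proof (rule integral_mono_AE)
    show "AE a in pi0 x. exp (- \<eta> * B) \<le> f a"
      using aeB
    proof eventually_elim
      case (elim a)
      then have "- B \<le> R x a" by (simp add: abs_le_iff)
      then have "\<eta> * (- B) \<le> \<eta> * R x a" using eta by (intro mult_left_mono) auto
      then show ?case by (simp add: f_def)
    qed
  qed (use fi in auto)
  then have "exp (- \<eta> * B) \<le> Z" using P.prob_space by simp
  then have Zpos: "Z > 0" by (smt (verit) exp_gt_zero)
  have gm: "(\<lambda>a. ennreal (f a / Z)) \<in> borel_measurable (pi0 x)" using fm by measurable
  have td: "tilt \<eta> pi0 R x = density (pi0 x) (\<lambda>a. ennreal (f a / Z))"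
    unfolding tilt_def f_def Z_def by simp
  have "emeasure (tilt \<eta> pi0 R x) (space (tilt \<eta> pi0 R x)) = 
     emeasure (density (pi0 x) (\<lambda>a. ennreal (f a / Z))) (space (pi0 x))"
    unfolding td by simp
  also have "\<dots> = (\<integral>\<^sup>+a. ennreal (f a / Z) * indicator (space (pi0 x)) a \<partial>pi0 x)"
    by (rule emeasure_density[OF gm]) simp
  also have "\<dots> = (\<integral>\<^sup>+a. ennreal (f a / Z) \<partial>pi0 x)"
    by (rule nn_integral_cong) simp
  also have "\<dots> = ennreal (\<integral>a. f a / Z \<partial>pi0 x)"
    using fi Zpos by (intro nn_integral_eq_integral integrable_divide_zero fi) (auto simp: f_def)
  also have "\<dots> = 1" using Zpos unfolding Z_def by simp
  finally show "prob_space (tilt \<eta> pi0 R x)" by (rule prob_spaceI)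
  show "AE a in tilt \<eta> pi0 R x. a \<notin> NS x"
    unfolding td AE_density[OF gm] using AE_NS[OF x] by eventually_elim auto
qed

end

context gl begin

lemma Rh0: "\<omega> \<in> space M \<Longrightarrow> Rh 0 \<omega> = (\<lambda>x a. 0)" using loop unfolding greedy_loop_def by blast
lemma RhF: "t \<ge> 1 \<Longrightarrow> \<omega> \<in> space M \<Longrightarrow> Rh t \<omega> \<in> F" using loop unfolding greedy_loop_def by blast
lemma ERM: "t \<ge> 1 \<Longrightarrow> \<omega> \<in> space M \<Longrightarrow> R \<in> F \<Longrightarrow>
   (1 / real t) * (\<Sum>s\<in>{1..t}. round_loss K X A Y s (Rh t \<omega>) \<omega>) \<le> (1 / real t) * (\<Sum>s\<in>{1..t}. round_loss K X A Y s R \<omega>)"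
  using loop unfolding greedy_loop_def by blast
lemma condlaw: "t \<ge> 1 \<Longrightarrow> Hs \<in> sets (H (t - 1)) \<Longrightarrow> E \<in> sets (obsM K d0) \<Longrightarrow>
        emeasure M (Hs \<inter> {\<omega>\<in>space M. (X t \<omega>, A t \<omega>, Y t \<omega>) \<in> E})
          = (\<integral>\<^sup>+\<omega>\<in>Hs. step_law K \<eta> d0 pi0 Rs (Rh (t - 1) \<omega>) E \<partial>M)"
  using loop unfolding greedy_loop_def by blast

lemma F_sec: assumes "R \<in> F" "x \<in> space d0" shows "(\<lambda>a. R x a) \<in> borel_measurable borel"
proof -
  have "(\<lambda>(x, a). R x a) \<in> borel_measurable (d0 \<Otimes>\<^sub>M borel)" using F_meas assms(1) by blast
  then have "(\<lambda>a. (\<lambda>(x, a). R x a) (x, a)) \<in> borel_measurable borel"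
    using measurable_Pair1'[OF assms(2)] by (rule measurable_compose[rotated])
  then show ?thesis by simp
qed

lemma Rh_sec: assumes "\<omega> \<in> space M" "x \<in> space d0"
  shows "(\<lambda>a. Rh t \<omega> x a) \<in> borel_measurable borel" "\<forall>a\<in>supp_pi0 pi0 x. \<bar>Rh t \<omega> x a\<bar> \<le> B"
proof -
  have "(\<lambda>a. Rh t \<omega> x a) \<in> borel_measurable borel \<and> (\<forall>a\<in>supp_pi0 pi0 x. \<bar>Rh t \<omega> x a\<bar> \<le> B)"
  proof (cases "t = 0")
    case True
    then show ?thesis using Rh0[OF assms(1)] B_nonneg by simp
  next
    case False
    then have "Rh t \<omega> \<in> F" using RhF[OF _ assms(1)] by simp
    then show ?thesis using F_sec[OF _ assms(2)] F_bounded assms(2) unfolding supp_le_def by blast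
  qed
  then show "(\<lambda>a. Rh t \<omega> x a) \<in> borel_measurable borel" "\<forall>a\<in>supp_pi0 pi0 x. \<bar>Rh t \<omega> x a\<bar> \<le> B"
    by auto
qed

definition "Ebad = {p \<in> space (obsM K d0 :: ('x \<times> (nat \<Rightarrow> 'a) \<times> nat) measure). \<exists>k<K. fst (snd p) k \<in> NS (fst p)}"

lemma Ebad_meas: "Ebad \<in> sets (obsM K d0)"
proof -
  define S where "S k U = {p \<in> space (obsM K d0 :: ('x \<times> (nat \<Rightarrow> 'a) \<times> nat) measure). fst (snd p) k \<in> U \<and> emeasure (pi0 (fst p)) U = 0}" for k U
  have "Ebad = (\<Union>k\<in>{..<K}. \<Union>U\<in>Bs. S k U)"
    unfolding Ebad_def S_def NS_def by auto
  also have "\<dots> \<in> sets (obsM K d0)"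
  proof (rule sets.countable_UN'', simp, rule sets.countable_UN''[OF Bs(1)])
    fix k U assume k: "k \<in> {..<K}" and U: "U \<in> Bs"
    have "open U" using Bs(2) U by (rule topological_basis_open)
    then have Ub: "U \<in> sets borel" by simp
    have em: "(\<lambda>x. emeasure (pi0 x) U) \<in> borel_measurable d0"
      using measurable_compose[OF measurable_prob_algebraD[OF pi0_kernel] measurable_emeasure_subprob_algebra[OF Ub]] .
    have comp: "(\<lambda>a::nat \<Rightarrow> 'a. a k) \<in> PiM {..<K} (\<lambda>_. borel) \<rightarrow>\<^sub>M borel"
      by (rule measurable_component_singleton[OF k])
    have m1: "(\<lambda>p::('x \<times> (nat \<Rightarrow> 'a) \<times> nat). fst (snd p) k) \<in> obsM K d0 \<rightarrow>\<^sub>M borel"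
    proof -
      have "(\<lambda>p::('x \<times> (nat \<Rightarrow> 'a) \<times> nat). fst (snd p)) \<in> obsM K d0 \<rightarrow>\<^sub>M PiM {..<K} (\<lambda>_. borel)"
        unfolding obsM_def by measurable
      from measurable_compose[OF this comp] show ?thesis by simp
    qed
    have m2: "(\<lambda>p::('x \<times> (nat \<Rightarrow> 'a) \<times> nat). emeasure (pi0 (fst p)) U) \<in> obsM K d0 \<rightarrow>\<^sub>M borel"
      unfolding obsM_def using em by measurable
    have "S k U = (\<lambda>p. fst (snd p) k) -` U \<inter> space (obsM K d0) \<inter> ((\<lambda>p. emeasure (pi0 (fst p)) U) -` {0} \<inter> space (obsM K d0))"
      unfolding S_def by auto
    also have "\<dots> \<in> sets (obsM K d0)"
      using measurable_sets[OF m1 Ub] measurable_sets[OF m2, of "{0}"] by auto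
    finally show "S k U \<in> sets (obsM K d0)" .
  qed
  finally show ?thesis .
qed

lemma step_law_Ebad: assumes "\<omega> \<in> space M" shows "step_law K \<eta> d0 pi0 Rs (Rh t \<omega>) Ebad = 0"
proof -
  have inner: "(\<integral>\<^sup>+a. (\<Sum>y<K. ennreal (choice_prob K Rs x a y) * indicator Ebad (x, a, y))
              \<partial>(PiM {..<K} (\<lambda>_. tilt \<eta> pi0 (Rh t \<omega>) x))) = 0" if x: "x \<in> space d0" for x
  proof -
    have tp: "prob_space (tilt \<eta> pi0 (Rh t \<omega>) x)" and tae: "AE a in tilt \<eta> pi0 (Rh t \<omega>) x. a \<notin> NS x"
      using tilt_facts[of x "Rh t \<omega>", OF x Rh_sec[OF assms x]] by auto
    have "AE a in PiM {..<K} (\<lambda>_. tilt \<eta> pi0 (Rh t \<omega>) x). \<forall>k\<in>{..<K}. a k \<notin> NS x"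
      by (intro eventually_ball_finite ballI AE_PiM_component tp tae) auto
    then have "AE a in PiM {..<K} (\<lambda>_. tilt \<eta> pi0 (Rh t \<omega>) x).
       (\<Sum>y<K. ennreal (choice_prob K Rs x a y) * indicator Ebad (x, a, y)) = 0"
      by eventually_elim (auto simp: Ebad_def)
    then have "(\<integral>\<^sup>+a. (\<Sum>y<K. ennreal (choice_prob K Rs x a y) * indicator Ebad (x, a, y))
              \<partial>(PiM {..<K} (\<lambda>_. tilt \<eta> pi0 (Rh t \<omega>) x))) = (\<integral>\<^sup>+a. 0 \<partial>(PiM {..<K} (\<lambda>_. tilt \<eta> pi0 (Rh t \<omega>) x)))"
      by (rule nn_integral_cong_AE)
    then show ?thesis by simp
  qed
  have "step_law K \<eta> d0 pi0 Rs (Rh t \<omega>) Ebad = (\<integral>\<^sup>+x. 0 \<partial>d0)"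
    unfolding step_law_def by (rule nn_integral_cong, rule inner)
  then show ?thesis by simp
qed

lemma AE_supp: assumes s: "s \<ge> 1" shows "AE \<omega> in M. \<forall>k<K. A s \<omega> k \<in> supp_pi0 pi0 (X s \<omega>)"
proof -
  let ?S = "{\<omega>\<in>space M. (X s \<omega>, A s \<omega>, Y s \<omega>) \<in> Ebad}"
  have "emeasure M (space M \<inter> ?S) = (\<integral>\<^sup>+\<omega>\<in>space M. step_law K \<eta> d0 pi0 Rs (Rh (s - 1) \<omega>) Ebad \<partial>M)"
    by (rule condlaw[OF s space_in_H Ebad_meas])
  also have "\<dots> = (\<integral>\<^sup>+\<omega>. 0 \<partial>M)"
    by (rule nn_integral_cong) (simp add: step_law_Ebad)
  finally have e0: "emeasure M ?S = 0" by (simp add: Int_absorb1)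
  have "?S = obs s -` Ebad \<inter> space M" unfolding obs_def by auto
  then have Sm: "?S \<in> sets M" using measurable_sets[OF obs_meas[OF s] Ebad_meas] by simp
  show ?thesis
  proof (rule AE_I')
    show "?S \<in> null_sets M" using Sm e0 by (intro null_setsI)
    show "{\<omega> \<in> space M. \<not> (\<forall>k<K. A s \<omega> k \<in> supp_pi0 pi0 (X s \<omega>))} \<subseteq> ?S"
    proof safe
      fix \<omega> k assume w: "\<omega> \<in> space M" and k: "k < K" and na: "A s \<omega> k \<notin> supp_pi0 pi0 (X s \<omega>)"
      have sp: "obs s \<omega> \<in> space (obsM K d0)" using measurable_space[OF obs_meas[OF s] w] .
      have x: "X s \<omega> \<in> space d0" using measurable_space[OF Xm[OF s] w] .
      have "A s \<omega> k \<in> NS (X s \<omega>)" using na supp_iff[OF x] by simp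
      then show "(X s \<omega>, A s \<omega>, Y s \<omega>) \<in> Ebad" using sp k unfolding Ebad_def obs_def by auto
    qed
  qed
qed

end

lemma exp_quad: fixes x :: real assumes "\<bar>x\<bar> \<le> 1" shows "exp x \<le> 1 + x + x\<^sup>2"
proof (cases "x \<ge> 0")
  case True then show ?thesis using exp_bound assms by auto
next
  case False
  define y where "y = - x"
  have y: "y \<ge> 0" using False y_def by simp
  have "(1 - y + y\<^sup>2) * (1 + y) = 1 + y^3" by (simp add: algebra_simps power2_eq_square power3_eq_cube)
  also have "\<dots> \<ge> 1" using y by simp
  finally have h: "(1 - y + y\<^sup>2) * (1 + y) \<ge> 1" .
  have e: "exp y \<ge> 1 + y" by (rule exp_ge_add_one_self)
  have "1 - y + y\<^sup>2 = (y - 1/2)\<^sup>2 + 3/4" by (simp add: power2_eq_square algebra_simps)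
  then have q: "1 - y + y\<^sup>2 \<ge> 0" by (metis add_nonneg_nonneg zero_le_power2 zero_le_divide_iff zero_le_numeral)
  have "(1 - y + y\<^sup>2) * (1 + y) \<le> (1 - y + y\<^sup>2) * exp y" by (rule mult_left_mono[OF e q])
  then have "1 \<le> (1 - y + y\<^sup>2) * exp y" using h by linarith
  then have "exp (- y) \<le> 1 - y + y\<^sup>2"
    by (simp add: exp_minus field_simps)
  then show ?thesis by (simp add: y_def)
qed

context gl begin

definition "lmax = ln (real K) + 2 * B"
definition "Zr R s \<omega> = round_loss K X A Y s R \<omega> - round_loss K X A Y s Rs \<omega>"
definition "Zc R s \<omega> = max (- lmax) (min lmax (Zr R s \<omega>))"
definition "good \<omega> \<longleftrightarrow> (\<forall>s\<ge>1. \<forall>k<K. A s \<omega> k \<in> supp_pi0 pi0 (X s \<omega>))"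

lemma AE_good: "AE \<omega> in M. good \<omega>"
proof -
  have "AE \<omega> in M. \<forall>s. s \<ge> 1 \<longrightarrow> (\<forall>k<K. A s \<omega> k \<in> supp_pi0 pi0 (X s \<omega>))"
  proof (subst AE_all_countable, intro allI)
    fix s :: nat
    show "AE \<omega> in M. s \<ge> 1 \<longrightarrow> (\<forall>k<K. A s \<omega> k \<in> supp_pi0 pi0 (X s \<omega>))"
    proof (cases "s \<ge> 1")
      case True
      show ?thesis using AE_supp[OF True] by eventually_elim simp
    qed simp
  qed
  then show ?thesis unfolding good_def by simp
qed

lemma X_space: "s \<ge> 1 \<Longrightarrow> \<omega> \<in> space M \<Longrightarrow> X s \<omega> \<in> space d0"
  using measurable_space[OF Xm] by blast
lemma Y_space: "s \<ge> 1 \<Longrightarrow> \<omega> \<in> space M \<Longrightarrow> Y s \<omega> < K"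
  using measurable_space[OF Ym] by fastforce

lemma loss_good:
  assumes "\<omega> \<in> space M" "good \<omega>" "s \<ge> 1" "R \<in> F"
  shows "0 \<le> round_loss K X A Y s R \<omega>" "round_loss K X A Y s R \<omega> \<le> lmax"
  using mloss_bounds[OF X_space[OF assms(3,1)] Y_space[OF assms(3,1)], of "A s \<omega>" pi0 R B]
    assms F_bounded unfolding round_loss_def lmax_def good_def by auto

lemma loss_lip:
  assumes "\<omega> \<in> space M" "good \<omega>" "s \<ge> 1"
    and "supp_le d0 pi0 (\<lambda>x a. R x a - R' x a) d"
  shows "round_loss K X A Y s R \<omega> \<le> round_loss K X A Y s R' \<omega> + 2 * d"
  using mloss_lip[OF X_space[OF assms(3,1)] Y_space[OF assms(3,1)], of "A s \<omega>" pi0 R R' d]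
    assms unfolding round_loss_def good_def by auto

lemma Zc_good:
  assumes "\<omega> \<in> space M" "good \<omega>" "s \<ge> 1" "R \<in> F"
  shows "Zc R s \<omega> = Zr R s \<omega>"
  using loss_good[OF assms] loss_good[OF assms(1-3) Rs_in] unfolding Zc_def Zr_def by auto

lemma Zc_bound: "\<bar>Zc R s \<omega>\<bar> \<le> lmax"
proof -
  have "lmax \<ge> 0" unfolding lmax_def using K B_nonneg by simp
  then show ?thesis unfolding Zc_def by auto
qed

lemma comp_meas: assumes k: "k < K"
  shows "(\<lambda>p::('x \<times> (nat \<Rightarrow> 'a) \<times> nat). (fst p, fst (snd p) k)) \<in> obsM K d0 \<rightarrow>\<^sub>M d0 \<Otimes>\<^sub>M borel"
proof -
  have comp: "(\<lambda>a::nat \<Rightarrow> 'a. a k) \<in> PiM {..<K} (\<lambda>_. borel) \<rightarrow>\<^sub>M borel"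
    using k by (intro measurable_component_singleton) simp
  have "(\<lambda>p::('x \<times> (nat \<Rightarrow> 'a) \<times> nat). fst (snd p)) \<in> obsM K d0 \<rightarrow>\<^sub>M PiM {..<K} (\<lambda>_. borel)"
    unfolding obsM_def by measurable
  from measurable_compose[OF this comp]
  have "(\<lambda>p::('x \<times> (nat \<Rightarrow> 'a) \<times> nat). fst (snd p) k) \<in> obsM K d0 \<rightarrow>\<^sub>M borel" by simp
  moreover have "(\<lambda>p::('x \<times> (nat \<Rightarrow> 'a) \<times> nat). fst p) \<in> obsM K d0 \<rightarrow>\<^sub>M d0"
    unfolding obsM_def by measurable
  ultimately show ?thesis by (intro measurable_Pair)
qed

lemma Rk_meas: assumes "R \<in> F" "k < K"
  shows "(\<lambda>p::('x \<times> (nat \<Rightarrow> 'a) \<times> nat). R (fst p) (fst (snd p) k)) \<in> borel_measurable (obsM K d0)"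
proof -
  have "(\<lambda>(x, a). R x a) \<in> borel_measurable (d0 \<Otimes>\<^sub>M borel)" using F_meas assms(1) by blast
  from measurable_compose[OF comp_meas[OF assms(2)] this] show ?thesis by simp
qed

lemma mloss_meas: assumes R: "R \<in> F"
  shows "(\<lambda>p::('x \<times> (nat \<Rightarrow> 'a) \<times> nat). mloss K R (fst p) (fst (snd p)) (snd (snd p))) \<in> borel_measurable (obsM K d0)"
proof -
  have ys: "(\<lambda>p::('x \<times> (nat \<Rightarrow> 'a) \<times> nat). snd (snd p)) \<in> obsM K d0 \<rightarrow>\<^sub>M count_space {..<K}"
    unfolding obsM_def by measurable
  have S: "(\<lambda>p::('x \<times> (nat \<Rightarrow> 'a) \<times> nat). \<Sum>k<K. exp (R (fst p) (fst (snd p) k))) \<in> borel_measurable (obsM K d0)"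
    using Rk_meas[OF R] by (intro borel_measurable_sum) (simp add: measurable_compose[OF _ borel_measurable_exp])
  have eqk: "(\<lambda>p::('x \<times> (nat \<Rightarrow> 'a) \<times> nat). snd (snd p) = k) \<in> obsM K d0 \<rightarrow>\<^sub>M count_space UNIV" for k
    using ys by measurable
  have T: "(\<lambda>p::('x \<times> (nat \<Rightarrow> 'a) \<times> nat). \<Sum>k<K. (if snd (snd p) = k then R (fst p) (fst (snd p) k) else 0))
       \<in> borel_measurable (obsM K d0)"
    using Rk_meas[OF R] eqk by (intro borel_measurable_sum) (auto intro!: measurable_If)
  have "(\<lambda>p::('x \<times> (nat \<Rightarrow> 'a) \<times> nat). R (fst p) (fst (snd p) (snd (snd p)))) \<in> borel_measurable (obsM K d0)"
  proof (subst measurable_cong)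
    fix p :: "'x \<times> (nat \<Rightarrow> 'a) \<times> nat" assume "p \<in> space (obsM K d0)"
    then have "snd (snd p) < K" using measurable_space[OF ys] by fastforce
    then show "R (fst p) (fst (snd p) (snd (snd p))) = (\<Sum>k<K. (if snd (snd p) = k then R (fst p) (fst (snd p) k) else 0))"
      by (simp add: sum.delta)
  qed (rule T)
  then show ?thesis unfolding mloss_def using S by measurable
qed

end

context gl begin

lemma rl_obs: "round_loss K X A Y s R \<omega> = (\<lambda>p. mloss K R (fst p) (fst (snd p)) (snd (snd p))) (obs s \<omega>)"
  by (simp add: round_loss_def obs_def)

lemma rl_meas_H: assumes "R \<in> F" "1 \<le> s" "s \<le> t"
  shows "(\<lambda>\<omega>. round_loss K X A Y s R \<omega>) \<in> borel_measurable (H t)"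
  unfolding rl_obs using measurable_compose[OF obs_meas_H[OF assms(2,3)] mloss_meas[OF assms(1)]] .

lemma rl_meas: assumes "R \<in> F" "1 \<le> s"
  shows "(\<lambda>\<omega>. round_loss K X A Y s R \<omega>) \<in> borel_measurable M"
  unfolding rl_obs using measurable_compose[OF obs_meas[OF assms(2)] mloss_meas[OF assms(1)]] .

lemma Zr_meas_H: "R \<in> F \<Longrightarrow> 1 \<le> s \<Longrightarrow> s \<le> t \<Longrightarrow> Zr R s \<in> borel_measurable (H t)"
  unfolding Zr_def[abs_def] using rl_meas_H Rs_in by measurable
lemma Zr_meas: "R \<in> F \<Longrightarrow> 1 \<le> s \<Longrightarrow> Zr R s \<in> borel_measurable M"
  unfolding Zr_def[abs_def] using rl_meas Rs_in by measurable
lemma Zc_meas_H: "R \<in> F \<Longrightarrow> 1 \<le> s \<Longrightarrow> s \<le> t \<Longrightarrow> Zc R s \<in> borel_measurable (H t)"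
  unfolding Zc_def[abs_def] using Zr_meas_H by measurable
lemma Zc_meas: "R \<in> F \<Longrightarrow> 1 \<le> s \<Longrightarrow> Zc R s \<in> borel_measurable M"
  unfolding Zc_def[abs_def] using Zr_meas by measurable

lemma lmax_nonneg: "lmax \<ge> 0" unfolding lmax_def using K B_nonneg by simp

lemma AE_CE_Zc: assumes R: "R \<in> F" "gap d0 aR Rs R \<ge> \<epsilon>0"
  shows "AE \<omega> in M. real_cond_exp M (H t) (Zc R (Suc t)) \<omega> \<ge> \<gamma>"
proof -
  interpret S: sigma_finite_subalgebra M "H t" by (rule sfs_H)
  have m: "AE \<omega> in M. real_cond_exp M (H t) (Zr R (Suc t)) \<omega> \<ge> \<gamma>"
    using margin[rule_format, of "Suc t" R] R unfolding Zr_def[abs_def] by simp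
  have "AE \<omega> in M. Zc R (Suc t) \<omega> = Zr R (Suc t) \<omega>"
    using AE_good AE_space by eventually_elim (use Zc_good R in auto)
  then have "AE \<omega> in M. real_cond_exp M (H t) (Zc R (Suc t)) \<omega> = real_cond_exp M (H t) (Zr R (Suc t)) \<omega>"
    by (rule S.real_cond_exp_cong) (use Zc_meas Zr_meas R in auto)
  with m show ?thesis by eventually_elim simp
qed

definition "Pf R lam t \<omega> = exp (- lam * (\<Sum>s\<in>{1..t}. Zc R s \<omega>))"

lemma Pf_meas_H: "R \<in> F \<Longrightarrow> Pf R lam t \<in> borel_measurable (H t)"
  unfolding Pf_def[abs_def] using Zc_meas_H by measurable auto

lemma Pf_meas: "R \<in> F \<Longrightarrow> Pf R lam t \<in> borel_measurable M"
  using Pf_meas_H measurable_from_subalg[OF subalg_H] by blast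

lemma Pf_bound: assumes "lam \<ge> 0" shows "0 \<le> Pf R lam t \<omega>" "Pf R lam t \<omega> \<le> exp (lam * (real t * lmax))"
proof -
  show "0 \<le> Pf R lam t \<omega>" unfolding Pf_def by simp
  have "\<bar>\<Sum>s\<in>{1..t}. Zc R s \<omega>\<bar> \<le> (\<Sum>s\<in>{1..t}. lmax)"
    by (rule order_trans[OF sum_abs sum_mono]) (rule Zc_bound)
  then have "- lam * (\<Sum>s\<in>{1..t}. Zc R s \<omega>) \<le> lam * (real t * lmax)"
    using assms by (simp add: abs_le_iff) (metis mult_left_mono neg_le_iff_le mult_minus_right)
  then show "Pf R lam t \<omega> \<le> exp (lam * (real t * lmax))" unfolding Pf_def by simp
qed

lemma Pf_int: assumes "R \<in> F" "lam \<ge> 0" shows "integrable M (Pf R lam t)"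
proof -
  interpret P: prob_space M by (rule PM)
  show ?thesis
    by (rule P.integrable_const_bound[where B="exp (lam * (real t * lmax))"])
       (use Pf_bound[OF assms(2)] Pf_meas[OF assms(1)] in auto)
qed

lemma Pf_Suc: "Pf R lam (Suc t) \<omega> = Pf R lam t \<omega> * exp (- lam * Zc R (Suc t) \<omega>)"
proof -
  have "(\<Sum>s\<in>{1..Suc t}. Zc R s \<omega>) = (\<Sum>s\<in>{1..t}. Zc R s \<omega>) + Zc R (Suc t) \<omega>"
    by (simp add: sum.cl_ivl_Suc)
  then have e: "- lam * (\<Sum>s\<in>{1..Suc t}. Zc R s \<omega>) = (- lam * (\<Sum>s\<in>{1..t}. Zc R s \<omega>)) + (- lam * Zc R (Suc t) \<omega>)"
    by (simp add: algebra_simps)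
  show ?thesis by (simp only: Pf_def e exp_add)
qed

lemma expo_bound:
  assumes R: "R \<in> F" "gap d0 aR Rs R \<ge> \<epsilon>0" and lam: "lam \<ge> 0" "lam * lmax \<le> 1" and gl: "\<gamma> \<le> lmax"
  shows "(\<integral>\<omega>. Pf R lam t \<omega> \<partial>M) \<le> (1 - lam * \<gamma> + lam\<^sup>2 * lmax\<^sup>2) ^ t"
proof (induction t)
  case 0
  interpret P: prob_space M by (rule PM)
  show ?case unfolding Pf_def by simp
next
  case (Suc t)
  interpret P: prob_space M by (rule PM)
  interpret S: sigma_finite_subalgebra M "H t" by (rule sfs_H)
  define q where "q = 1 - lam * \<gamma> + lam\<^sup>2 * lmax\<^sup>2"
  have "lam * \<gamma> \<le> lam * lmax" using lam gl by (intro mult_left_mono) auto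
  then have q0: "q \<ge> 0" unfolding q_def using lam by (smt (verit) zero_le_power2 mult_nonneg_nonneg)
  let ?P = "Pf R lam t" and ?Z = "Zc R (Suc t)"
  have Pm: "?P \<in> borel_measurable M" by (rule Pf_meas[OF R(1)])
  have PmH: "?P \<in> borel_measurable (H t)" by (rule Pf_meas_H[OF R(1)])
  have Zm: "?Z \<in> borel_measurable M" by (rule Zc_meas[OF R(1)]) simp
  have Pi: "integrable M ?P" by (rule Pf_int[OF R(1) lam(1)])
  have Zb: "\<bar>?Z \<omega>\<bar> \<le> lmax" for \<omega> by (rule Zc_bound)
  have PZi: "integrable M (\<lambda>\<omega>. ?P \<omega> * ?Z \<omega>)"
    by (rule P.integrable_const_bound[where B="exp (lam * (real t * lmax)) * lmax"])
       (use Pf_bound[OF lam(1)] Zb Pm Zm in \<open>auto simp: abs_mult intro!: mult_mono\<close>)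
  have nb: "norm (?P \<omega> * (?Z \<omega>)\<^sup>2) \<le> exp (lam * (real t * lmax)) * lmax\<^sup>2" for \<omega>
  proof -
    have z2: "(?Z \<omega>)\<^sup>2 \<le> lmax\<^sup>2" using Zb[of \<omega>] by (metis abs_ge_zero power2_abs power_mono)
    have "norm (?P \<omega> * (?Z \<omega>)\<^sup>2) = ?P \<omega> * (?Z \<omega>)\<^sup>2" using Pf_bound(1)[OF lam(1)] by simp
    also have "\<dots> \<le> exp (lam * (real t * lmax)) * lmax\<^sup>2"
      by (rule mult_mono[OF Pf_bound(2)[OF lam(1)] z2]) auto
    finally show ?thesis .
  qed
  have PZ2i: "integrable M (\<lambda>\<omega>. ?P \<omega> * (?Z \<omega>)\<^sup>2)"
    by (rule P.integrable_const_bound[where B="exp (lam * (real t * lmax)) * lmax\<^sup>2"])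
       (use nb Pm Zm in auto)
  have ce1: "integrable M (\<lambda>\<omega>. ?P \<omega> * real_cond_exp M (H t) ?Z \<omega>)"
    and ce2: "(\<integral>\<omega>. ?P \<omega> * real_cond_exp M (H t) ?Z \<omega> \<partial>M) = (\<integral>\<omega>. ?P \<omega> * ?Z \<omega> \<partial>M)"
    using S.real_cond_exp_intg[OF PZi PmH Zm] by auto
  have ce3: "(\<integral>\<omega>. ?P \<omega> * \<gamma> \<partial>M) \<le> (\<integral>\<omega>. ?P \<omega> * real_cond_exp M (H t) ?Z \<omega> \<partial>M)"
  proof (rule integral_mono_AE)
    show "integrable M (\<lambda>\<omega>. ?P \<omega> * \<gamma>)" using Pi by simp
    show "integrable M (\<lambda>\<omega>. ?P \<omega> * real_cond_exp M (H t) ?Z \<omega>)" by (rule ce1)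
    show "AE \<omega> in M. ?P \<omega> * \<gamma> \<le> ?P \<omega> * real_cond_exp M (H t) ?Z \<omega>"
      using AE_CE_Zc[OF R, of t] by eventually_elim (use Pf_bound[OF lam(1)] in \<open>auto intro: mult_left_mono\<close>)
  qed
  have pw: "Pf R lam (Suc t) \<omega> \<le> ?P \<omega> - lam * (?P \<omega> * ?Z \<omega>) + lam\<^sup>2 * (?P \<omega> * (?Z \<omega>)\<^sup>2)" for \<omega>
  proof -
    have "\<bar>- lam * ?Z \<omega>\<bar> \<le> lam * lmax" using lam Zb[of \<omega>] by (simp add: abs_mult mult_left_mono)
    then have "\<bar>- lam * ?Z \<omega>\<bar> \<le> 1" using lam by linarith
    then have e: "exp (- lam * ?Z \<omega>) \<le> 1 + (- lam * ?Z \<omega>) + (- lam * ?Z \<omega>)\<^sup>2" by (rule exp_quad)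
    have "Pf R lam (Suc t) \<omega> = ?P \<omega> * exp (- lam * ?Z \<omega>)" by (rule Pf_Suc)
    also have "\<dots> \<le> ?P \<omega> * (1 + (- lam * ?Z \<omega>) + (- lam * ?Z \<omega>)\<^sup>2)"
      using e Pf_bound[OF lam(1)] by (intro mult_left_mono) auto
    also have "\<dots> = ?P \<omega> - lam * (?P \<omega> * ?Z \<omega>) + lam\<^sup>2 * (?P \<omega> * (?Z \<omega>)\<^sup>2)"
      by (simp add: algebra_simps power2_eq_square)
    finally show ?thesis .
  qed
  have i1: "integrable M (\<lambda>\<omega>. ?P \<omega> - lam * (?P \<omega> * ?Z \<omega>) + lam\<^sup>2 * (?P \<omega> * (?Z \<omega>)\<^sup>2))"
    using Pi PZi PZ2i by auto
  have "(\<integral>\<omega>. Pf R lam (Suc t) \<omega> \<partial>M) \<le> (\<integral>\<omega>. ?P \<omega> - lam * (?P \<omega> * ?Z \<omega>) + lam\<^sup>2 * (?P \<omega> * (?Z \<omega>)\<^sup>2) \<partial>M)"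
    by (rule integral_mono[OF Pf_int[OF R(1) lam(1)] i1 pw])
  also have "\<dots> = (\<integral>\<omega>. ?P \<omega> \<partial>M) - lam * (\<integral>\<omega>. ?P \<omega> * ?Z \<omega> \<partial>M) + lam\<^sup>2 * (\<integral>\<omega>. ?P \<omega> * (?Z \<omega>)\<^sup>2 \<partial>M)"
    using Pi PZi PZ2i by simp
  also have "\<dots> \<le> (\<integral>\<omega>. ?P \<omega> \<partial>M) - lam * (\<gamma> * (\<integral>\<omega>. ?P \<omega> \<partial>M)) + lam\<^sup>2 * (lmax\<^sup>2 * (\<integral>\<omega>. ?P \<omega> \<partial>M))"
  proof -
    have a: "\<gamma> * (\<integral>\<omega>. ?P \<omega> \<partial>M) \<le> (\<integral>\<omega>. ?P \<omega> * ?Z \<omega> \<partial>M)"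
      using ce3 ce2 by (simp add: mult.commute)
    have "(\<integral>\<omega>. ?P \<omega> * (?Z \<omega>)\<^sup>2 \<partial>M) \<le> (\<integral>\<omega>. ?P \<omega> * lmax\<^sup>2 \<partial>M)"
    proof (rule integral_mono[OF PZ2i])
      show "integrable M (\<lambda>\<omega>. ?P \<omega> * lmax\<^sup>2)" using Pi by simp
      fix \<omega>
      have "(?Z \<omega>)\<^sup>2 \<le> lmax\<^sup>2" using Zb[of \<omega>] by (metis abs_ge_zero power2_abs power_mono)
      then show "?P \<omega> * (?Z \<omega>)\<^sup>2 \<le> ?P \<omega> * lmax\<^sup>2" using Pf_bound[OF lam(1)] by (intro mult_left_mono) auto
    qed
    then have b: "(\<integral>\<omega>. ?P \<omega> * (?Z \<omega>)\<^sup>2 \<partial>M) \<le> lmax\<^sup>2 * (\<integral>\<omega>. ?P \<omega> \<partial>M)" by (simp add: mult.commute)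
    show ?thesis using a b lam by (smt (verit) mult_left_mono zero_le_power2)
  qed
  also have "\<dots> = q * (\<integral>\<omega>. ?P \<omega> \<partial>M)" unfolding q_def by (simp add: algebra_simps)
  also have "\<dots> \<le> q * q ^ t" using Suc.IH q0 unfolding q_def by (intro mult_left_mono) auto
  finally show ?case unfolding q_def by simp
qed

end

context gl begin

lemma lmax_pos: "lmax > 0"
proof -
  have "ln (real K) > 0" using K by simp
  then show ?thesis unfolding lmax_def using B_nonneg by simp
qed

lemma Zc_int: "R \<in> F \<Longrightarrow> 1 \<le> s \<Longrightarrow> integrable M (Zc R s)"
proof -
  assume a: "R \<in> F" "1 \<le> s"
  interpret P: prob_space M by (rule PM)
  show ?thesis by (rule P.integrable_const_bound[where B=lmax]) (use Zc_bound Zc_meas[OF a] in auto)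
qed

lemma gamma_le: assumes R: "R \<in> F" "gap d0 aR Rs R \<ge> \<epsilon>0" shows "\<gamma> \<le> lmax"
proof -
  interpret P: prob_space M by (rule PM)
  interpret S: sigma_finite_subalgebra M "H 0" by (rule sfs_H)
  have zi: "integrable M (Zc R (Suc 0))" by (rule Zc_int[OF R(1)]) simp
  have "\<gamma> = (\<integral>\<omega>. \<gamma> \<partial>M)" using P.prob_space by simp
  also have "\<dots> \<le> (\<integral>\<omega>. real_cond_exp M (H 0) (Zc R (Suc 0)) \<omega> \<partial>M)"
    by (rule integral_mono_AE) (use S.real_cond_exp_int(1)[OF zi] AE_CE_Zc[OF R, of 0] in auto)
  also have "\<dots> = (\<integral>\<omega>. Zc R (Suc 0) \<omega> \<partial>M)" by (rule S.real_cond_exp_int(2)[OF zi])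
  also have "\<dots> \<le> (\<integral>\<omega>. lmax \<partial>M)"
    by (rule integral_mono[OF zi]) (use Zc_bound in \<open>auto simp: abs_le_iff\<close>)
  also have "\<dots> = lmax" using P.prob_space by simp
  finally show ?thesis .
qed

definition "cg = \<gamma>\<^sup>2 / (128 * lmax\<^sup>2)"

definition "Ev R t = {\<omega>\<in>space M. (\<Sum>s\<in>{1..t}. Zc R s \<omega>) \<le> \<gamma> * real t / 8}"

lemma Ev_meas: "R \<in> F \<Longrightarrow> Ev R t \<in> sets M"
proof -
  assume R: "R \<in> F"
  have "(\<lambda>\<omega>. \<Sum>s\<in>{1..t}. Zc R s \<omega>) \<in> borel_measurable M"
    using Zc_meas[OF R] by (intro borel_measurable_sum) auto
  then show ?thesis unfolding Ev_def by measurable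
qed

lemma tail_one:
  assumes R: "R \<in> F" "gap d0 aR Rs R \<ge> \<epsilon>0"
  shows "measure M (Ev R t) \<le> exp (- cg * real t)"
proof -
  interpret P: prob_space M by (rule PM)
  have gl: "\<gamma> \<le> lmax" by (rule gamma_le[OF R])
  have lp: "lmax > 0" by (rule lmax_pos)
  define lam where "lam = 7 * \<gamma> / (16 * lmax\<^sup>2)"
  have lam0: "lam \<ge> 0" unfolding lam_def using gamma by simp
  have "lam * lmax = 7 * \<gamma> / (16 * lmax)" unfolding lam_def using lp by (simp add: power2_eq_square field_simps)
  also have "\<dots> \<le> 7 * lmax / (16 * lmax)" using gl lp by (intro divide_right_mono) auto
  also have "\<dots> \<le> 1" using lp by simp
  finally have lam1: "lam * lmax \<le> 1" .
  define q where "q = 1 - lam * \<gamma> + lam\<^sup>2 * lmax\<^sup>2"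
  define c where "c = exp (- lam * (\<gamma> * real t / 8))"
  have cpos: "c > 0" unfolding c_def by simp
  have "Ev R t \<subseteq> {\<omega>\<in>space M. Pf R lam t \<omega> \<ge> c}"
  proof safe
    fix \<omega> assume "\<omega> \<in> Ev R t"
    then have "\<omega> \<in> space M" "(\<Sum>s\<in>{1..t}. Zc R s \<omega>) \<le> \<gamma> * real t / 8" unfolding Ev_def by auto
    then have "lam * (\<Sum>s\<in>{1..t}. Zc R s \<omega>) \<le> lam * (\<gamma> * real t / 8)"
      using lam0 by (intro mult_left_mono) auto
    then show "c \<le> Pf R lam t \<omega>"
      unfolding c_def Pf_def by simp
    show "\<omega> \<in> space M" by fact
  qed
  then have "measure M (Ev R t) \<le> measure M {\<omega>\<in>space M. Pf R lam t \<omega> \<ge> c}"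
    by (intro P.finite_measure_mono) (use Pf_meas[OF R(1)] in measurable)
  also have "\<dots> \<le> (\<integral>\<omega>. Pf R lam t \<omega> \<partial>M) / c"
  proof (rule integral_Markov_inequality_measure[OF Pf_int[OF R(1) lam0] sets.top _ cpos])
    show "AE x in M. 0 \<le> Pf R lam t x" using Pf_bound(1)[OF lam0] by simp
  qed
  also have "\<dots> \<le> q ^ t / c"
    using expo_bound[OF R lam0 lam1 gl, of t] cpos unfolding q_def by (intro divide_right_mono) auto
  also have "\<dots> \<le> exp (- lam * \<gamma> + lam\<^sup>2 * lmax\<^sup>2) ^ t / c"
  proof -
    have "lam * \<gamma> \<le> lam * lmax" using lam0 gl by (intro mult_left_mono) auto
    moreover have "lam\<^sup>2 * lmax\<^sup>2 \<ge> 0" by simp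
    ultimately have q0: "0 \<le> q" unfolding q_def using lam1 by linarith
    have "q \<le> exp (- lam * \<gamma> + lam\<^sup>2 * lmax\<^sup>2)" unfolding q_def
      using exp_ge_add_one_self[of "- lam * \<gamma> + lam\<^sup>2 * lmax\<^sup>2"] by linarith
    then show ?thesis using q0 cpos by (intro divide_right_mono power_mono) auto
  qed
  also have "\<dots> = exp (real t * (- lam * \<gamma> + lam\<^sup>2 * lmax\<^sup>2) - (- lam * (\<gamma> * real t / 8)))"
    unfolding c_def by (simp only: exp_diff exp_of_nat_mult)
  also have "\<dots> \<le> exp (- cg * real t)"
  proof -
    have "real t * (- lam * \<gamma> + lam\<^sup>2 * lmax\<^sup>2) - (- lam * (\<gamma> * real t / 8)) = - real t * (49 * \<gamma>\<^sup>2 / (256 * lmax\<^sup>2))"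
      unfolding lam_def using lp by (simp add: power2_eq_square field_simps)
    also have "\<dots> \<le> - real t * (\<gamma>\<^sup>2 / (128 * lmax\<^sup>2))"
      using lp by (intro mult_left_mono_neg) (auto simp: field_simps)
    finally show ?thesis unfolding cg_def by (simp add: mult.commute)
  qed
  finally show ?thesis .
qed

end

context gl begin

definition "Cv = (SOME C. finite C \<and> card C = covering_number d0 pi0 F (\<gamma>/32) \<and>
           (\<forall>R\<in>F. \<exists>c\<in>C. supp_le d0 pi0 (\<lambda>x a. R x a - c x a) (\<gamma>/32)))"

lemma Cv: "finite Cv" "card Cv = covering_number d0 pi0 F (\<gamma>/32)"
   "\<forall>R\<in>F. \<exists>c\<in>Cv. supp_le d0 pi0 (\<lambda>x a. R x a - c x a) (\<gamma>/32)"
proof -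
  have "\<gamma>/32 > 0" using gamma by simp
  from someI_ex[OF covering_exists[OF F_compact this]]
  show "finite Cv" "card Cv = covering_number d0 pi0 F (\<gamma>/32)"
   "\<forall>R\<in>F. \<exists>c\<in>Cv. supp_le d0 pi0 (\<lambda>x a. R x a - c x a) (\<gamma>/32)"
    unfolding Cv_def by auto
qed

lemma Cv_ne: "card Cv \<ge> 1"
proof -
  obtain c where "c \<in> Cv" using Cv(3) Rs_in by blast
  then show ?thesis using Cv(1) by (metis One_nat_def Suc_leI card_gt_0_iff empty_iff)
qed

definition "Jv = {c\<in>Cv. \<exists>R. R \<in> F \<and> supp_le d0 pi0 (\<lambda>x a. R x a - c x a) (\<gamma>/32) \<and> gap d0 aR Rs R \<ge> \<epsilon>0}"
definition "rep c = (SOME R. R \<in> F \<and> supp_le d0 pi0 (\<lambda>x a. R x a - c x a) (\<gamma>/32) \<and> gap d0 aR Rs R \<ge> \<epsilon>0)"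

lemma rep: assumes "c \<in> Jv"
  shows "rep c \<in> F \<and> supp_le d0 pi0 (\<lambda>x a. rep c x a - c x a) (\<gamma>/32) \<and> gap d0 aR Rs (rep c) \<ge> \<epsilon>0"
proof -
  have "\<exists>R. R \<in> F \<and> supp_le d0 pi0 (\<lambda>x a. R x a - c x a) (\<gamma>/32) \<and> gap d0 aR Rs R \<ge> \<epsilon>0"
    using assms unfolding Jv_def by blast
  from someI_ex[OF this] show ?thesis unfolding rep_def .
qed

definition "U t = (\<Union>c\<in>Jv. Ev (rep c) t)"

lemma Jv_fin: "finite Jv" using Cv(1) unfolding Jv_def by simp

lemma U_meas: "U t \<in> sets M"
  unfolding U_def using Jv_fin rep Ev_meas by (intro sets.finite_UN) auto

lemma U_measure: "measure M (U t) \<le> real (card Cv) * exp (- cg * real t)"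
proof -
  interpret P: prob_space M by (rule PM)
  have "measure M (U t) \<le> (\<Sum>c\<in>Jv. measure M (Ev (rep c) t))"
    unfolding U_def using Jv_fin rep Ev_meas by (intro measure_subadditive_finite) auto
  also have "\<dots> \<le> (\<Sum>c\<in>Jv. exp (- cg * real t))"
    using rep tail_one by (intro sum_mono) auto
  also have "\<dots> = real (card Jv) * exp (- cg * real t)" by simp
  also have "\<dots> \<le> real (card Cv) * exp (- cg * real t)"
    using card_mono[OF Cv(1), of Jv] unfolding Jv_def by (intro mult_right_mono) auto
  finally show ?thesis .
qed

lemma incl:
  assumes t: "t \<ge> 1" and w: "\<omega> \<in> space M" "good \<omega>" and g: "gap d0 aR Rs (Rh t \<omega>) \<ge> \<epsilon>0"
  shows "\<omega> \<in> U t"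
proof -
  define R where "R = Rh t \<omega>"
  have RF: "R \<in> F" unfolding R_def by (rule RhF[OF t w(1)])
  obtain c where c: "c \<in> Cv" "supp_le d0 pi0 (\<lambda>x a. R x a - c x a) (\<gamma>/32)" using Cv(3) RF by blast
  have cJ: "c \<in> Jv" unfolding Jv_def using c RF g R_def by blast
  define R' where "R' = rep c"
  have R': "R' \<in> F" "supp_le d0 pi0 (\<lambda>x a. R' x a - c x a) (\<gamma>/32)" "gap d0 aR Rs R' \<ge> \<epsilon>0"
    using rep[OF cJ] unfolding R'_def by auto
  have d: "supp_le d0 pi0 (\<lambda>x a. R' x a - R x a) (\<gamma>/32 + \<gamma>/32)"
    by (rule supp_le_trans[OF R'(2) supp_le_sym[OF c(2)]])
  have lip: "round_loss K X A Y s R' \<omega> \<le> round_loss K X A Y s R \<omega> + \<gamma> / 8" if "s \<in> {1..t}" for s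
    using loss_lip[OF w, of s R' R "\<gamma>/32 + \<gamma>/32"] that d by simp
  have erm: "(\<Sum>s\<in>{1..t}. round_loss K X A Y s R \<omega>) \<le> (\<Sum>s\<in>{1..t}. round_loss K X A Y s Rs \<omega>)"
  proof -
    have "(1 / real t) * (\<Sum>s\<in>{1..t}. round_loss K X A Y s R \<omega>) \<le> (1 / real t) * (\<Sum>s\<in>{1..t}. round_loss K X A Y s Rs \<omega>)"
      using ERM[OF t w(1) Rs_in] unfolding R_def .
    moreover have pos: "1 / real t > 0" using t by simp
    ultimately show ?thesis using mult_le_cancel_left_pos[OF pos] by blast
  qed
  have "(\<Sum>s\<in>{1..t}. Zc R' s \<omega>) = (\<Sum>s\<in>{1..t}. round_loss K X A Y s R' \<omega> - round_loss K X A Y s Rs \<omega>)"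
    using Zc_good[OF w _ R'(1)] unfolding Zr_def by (intro sum.cong) auto
  also have "\<dots> \<le> (\<Sum>s\<in>{1..t}. round_loss K X A Y s R \<omega> + \<gamma> / 8 - round_loss K X A Y s Rs \<omega>)"
    using lip by (intro sum_mono) auto
  also have "\<dots> = (\<Sum>s\<in>{1..t}. round_loss K X A Y s R \<omega>) - (\<Sum>s\<in>{1..t}. round_loss K X A Y s Rs \<omega>) + \<gamma> * real t / 8"
    by (simp add: sum.distrib sum_subtractf)
  also have "\<dots> \<le> \<gamma> * real t / 8" using erm by simp
  finally have "\<omega> \<in> Ev R' t" unfolding Ev_def using w(1) by simp
  then show ?thesis unfolding U_def R'_def using cJ by blast
qed

end

context gl begin

lemma cg_pos: "cg > 0" unfolding cg_def using gamma lmax_pos by simp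

lemma part1: assumes t: "t \<ge> 1"
  shows "measure M {\<omega>\<in>space M. gap d0 aR Rs (Rh t \<omega>) \<ge> \<epsilon>0}
           \<le> 2 * real (covering_number d0 pi0 F (\<gamma> / 32)) * exp (- cg * real t)"
proof -
  interpret P: prob_space M by (rule PM)
  let ?S = "{\<omega>\<in>space M. gap d0 aR Rs (Rh t \<omega>) \<ge> \<epsilon>0}"
  have "measure M ?S \<le> measure M (U t)"
  proof (cases "?S \<in> sets M")
    case True
    have "AE \<omega> in M. \<omega> \<in> ?S \<longrightarrow> \<omega> \<in> U t"
      using AE_good by eventually_elim (auto intro: incl[OF t])
    then have "emeasure M ?S \<le> emeasure M (U t)"
      by (intro emeasure_mono_AE U_meas)
    then show ?thesis using True U_meas by (simp add: P.emeasure_eq_measure)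
  next
    case False
    then show ?thesis by (simp add: measure_notin_sets)
  qed
  also have "\<dots> \<le> real (card Cv) * exp (- cg * real t)" by (rule U_measure)
  also have "\<dots> \<le> 2 * real (covering_number d0 pi0 F (\<gamma> / 32)) * exp (- cg * real t)"
    unfolding Cv(2) by (intro mult_right_mono) auto
  finally show ?thesis .
qed

lemma U_summable: "summable (\<lambda>n. measure M (U n))"
proof (rule summable_comparison_test')
  show "summable (\<lambda>n. real (card Cv) * exp (- cg) ^ n)"
    using cg_pos by (intro summable_mult summable_geometric) auto
  fix n
  have "exp (- cg) ^ n = exp (- cg * real n)" by (simp add: exp_of_nat_mult[symmetric] mult.commute)
  then show "norm (measure M (U n)) \<le> real (card Cv) * exp (- cg) ^ n"
    using U_measure[of n] by simp
qed

lemma part2: "AE \<omega> in M. finite {t. gap d0 aR Rs (Rh t \<omega>) \<ge> \<epsilon>0}"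
proof -
  interpret P: prob_space M by (rule PM)
  have bc: "AE \<omega> in M. eventually (\<lambda>n. \<omega> \<in> space M - U n) sequentially"
    by (rule borel_cantelli_AE1[OF U_meas _ U_summable]) (simp add: P.emeasure_eq_measure)
  show ?thesis using bc AE_good AE_space
  proof eventually_elim
    case (elim \<omega>)
    then obtain N where N: "\<And>n. n \<ge> N \<Longrightarrow> \<omega> \<notin> U n" unfolding eventually_sequentially by blast
    have "{t. gap d0 aR Rs (Rh t \<omega>) \<ge> \<epsilon>0} \<subseteq> {..max N 1}"
    proof
      fix t assume a: "t \<in> {t. gap d0 aR Rs (Rh t \<omega>) \<ge> \<epsilon>0}"
      show "t \<in> {..max N 1}"
      proof (rule ccontr)
        assume "t \<notin> {..max N 1}"
        then have "t \<ge> 1" "t \<ge> N" by auto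
        then show False using incl[of t \<omega>] elim a N by auto
      qed
    qed
    then show ?case by (rule finite_subset) simp
  qed
qed

end

context gl begin

lemma part3:
  "(\<integral>\<^sup>+\<omega>. (\<Sum>t. indicator {\<omega>'. gap d0 aR Rs (Rh t \<omega>') \<ge> \<epsilon>0} \<omega>) \<partial>M)
     \<le> ennreal (1 + real_of_int \<lceil>(1 / cg) * ln (2 * real (covering_number d0 pi0 F (\<gamma> / 32)))\<rceil> + 1 / (exp cg - 1))"
proof -
  interpret P: prob_space M by (rule PM)
  define N where "N = real (card Cv)"
  have N1: "N \<ge> 1" unfolding N_def using Cv_ne by simp
  have cgp: "cg > 0" by (rule cg_pos)
  define r where "r = (1 / cg) * ln (2 * N)"
  have lnp: "ln (2 * N) > 0" using N1 by simp
  have r0: "r > 0" unfolding r_def using cgp lnp by simp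
  define T0 where "T0 = nat \<lceil>r\<rceil>"
  have T0r: "real T0 = real_of_int \<lceil>r\<rceil>" unfolding T0_def using r0 by simp
  have rT: "r \<le> real T0" unfolding T0r by simp
  have "ln (2 * N) \<le> cg * real T0"
  proof -
    have "ln (2 * N) = cg * r" unfolding r_def using cgp by simp
    also have "\<dots> \<le> cg * real T0" using rT cgp by (intro mult_left_mono) auto
    finally show ?thesis .
  qed
  then have "exp (ln (2 * N)) \<le> exp (cg * real T0)" by simp
  then have "2 * N \<le> exp (cg * real T0)" using N1 by simp
  then have "N \<le> exp (cg * real T0)" using N1 by linarith
  then have NT: "N * exp (- cg * real T0) \<le> 1"
    by (simp add: exp_minus field_simps)
  define a where "a t = (if t \<le> T0 then 1 else N * exp (- cg * real t))" for t
  define g where "g t \<omega> = (if t \<le> T0 then 1 else indicator (U t) \<omega> :: ennreal)" for t \<omega>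
  have a0: "a t \<ge> 0" for t unfolding a_def N_def by simp
  have shift: "a (n + Suc T0) = N * exp (- cg * real T0) * (exp (- cg) * exp (- cg) ^ n)" for n
    unfolding a_def by (simp add: exp_of_nat_mult[symmetric] exp_add[symmetric] algebra_simps)
  have ge: "exp (- cg) < 1" using cgp by simp
  have sg: "summable (\<lambda>n. exp (- cg) * exp (- cg) ^ n)" using ge by (intro summable_mult summable_geometric) auto
  have sa_shift: "summable (\<lambda>n. a (n + Suc T0))" unfolding shift by (rule summable_mult[OF sg])
  then have sa: "summable a" by (rule summable_iff_shift[THEN iffD1])
  have step1: "AE \<omega> in M. (\<Sum>t. indicator {\<omega>'. gap d0 aR Rs (Rh t \<omega>') \<ge> \<epsilon>0} \<omega>) \<le> (\<Sum>t. g t \<omega>)"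
    using AE_good AE_space
  proof eventually_elim
    case (elim \<omega>)
    show ?case
    proof (rule suminf_le)
      fix t
      show "indicator {\<omega>'. gap d0 aR Rs (Rh t \<omega>') \<ge> \<epsilon>0} \<omega> \<le> g t \<omega>"
      proof (cases "t \<le> T0")
        case True then show ?thesis unfolding g_def by (simp add: indicator_def)
      next
        case False
        then have "t \<ge> 1" by simp
        then show ?thesis unfolding g_def using False incl[of t \<omega>] elim by (auto simp: indicator_def)
      qed
    qed auto
  qed
  have gm: "g t \<in> borel_measurable M" for t unfolding g_def[abs_def] using U_meas[of t] by measurable
  have "(\<integral>\<^sup>+\<omega>. (\<Sum>t. indicator {\<omega>'. gap d0 aR Rs (Rh t \<omega>') \<ge> \<epsilon>0} \<omega>) \<partial>M) \<le> (\<integral>\<^sup>+\<omega>. (\<Sum>t. g t \<omega>) \<partial>M)"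
    by (rule nn_integral_mono_AE[OF step1])
  also have "\<dots> = (\<Sum>t. integral\<^sup>N M (g t))" by (rule nn_integral_suminf[OF gm])
  also have "\<dots> \<le> (\<Sum>t. ennreal (a t))"
  proof (rule suminf_le)
    fix t
    show "integral\<^sup>N M (g t) \<le> ennreal (a t)"
    proof (cases "t \<le> T0")
      case True
      then show ?thesis unfolding g_def a_def using P.emeasure_space_1 by simp
    next
      case False
      then have "integral\<^sup>N M (g t) = emeasure M (U t)" unfolding g_def using U_meas by simp
      also have "\<dots> = ennreal (measure M (U t))" by (simp add: P.emeasure_eq_measure)
      also have "\<dots> \<le> ennreal (a t)" using U_measure[of t] False unfolding a_def N_def by (intro ennreal_leI) simp
      finally show ?thesis .
    qed
  qed auto
  also have "\<dots> = ennreal (\<Sum>t. a t)" by (rule suminf_ennreal2[OF a0 sa])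
  also have "\<dots> \<le> ennreal (1 + real T0 + 1 / (exp cg - 1))"
  proof (rule ennreal_leI)
    have "(\<Sum>t. a t) = (\<Sum>n. a (n + Suc T0)) + (\<Sum>i<Suc T0. a i)" by (rule suminf_split_initial_segment[OF sa])
    also have "(\<Sum>i<Suc T0. a i) = real (Suc T0)" unfolding a_def by simp
    also have "(\<Sum>n. a (n + Suc T0)) \<le> (\<Sum>n. exp (- cg) * exp (- cg) ^ n)"
    proof (rule suminf_le[OF _ sa_shift sg])
      fix n
      have "N * exp (- cg * real T0) * (exp (- cg) * exp (- cg) ^ n) \<le> 1 * (exp (- cg) * exp (- cg) ^ n)"
        using NT by (intro mult_right_mono) auto
      then show "a (n + Suc T0) \<le> exp (- cg) * exp (- cg) ^ n" unfolding shift by simp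
    qed
    also have "(\<Sum>n. exp (- cg) * exp (- cg) ^ n) = exp (- cg) * (1 / (1 - exp (- cg)))"
      using ge by (simp add: suminf_mult suminf_geometric)
    also have "\<dots> = 1 / (exp cg - 1)"
      using cgp by (simp add: exp_minus field_simps)
    finally show "(\<Sum>t. a t) \<le> 1 + real T0 + 1 / (exp cg - 1)" by simp
  qed
  finally show ?thesis unfolding T0r r_def N_def Cv(2) .
qed

end

theorem lemma10:
  fixes M :: "'w measure"
    and d0 :: "'x measure"
    and pi0 :: "'x \<Rightarrow> 'a::{metric_space, second_countable_topology} measure"
    and F :: "('x \<Rightarrow> 'a \<Rightarrow> real) set"
    and aR :: "('x \<Rightarrow> 'a \<Rightarrow> real) \<Rightarrow> 'x \<Rightarrow> 'a"
    and Rs :: "'x \<Rightarrow> 'a \<Rightarrow> real"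
    and K :: nat and \<eta> B \<epsilon>0 \<gamma> :: real
    and X :: "nat \<Rightarrow> 'w \<Rightarrow> 'x" and A :: "nat \<Rightarrow> 'w \<Rightarrow> nat \<Rightarrow> 'a" and Y :: "nat \<Rightarrow> 'w \<Rightarrow> nat"
    and Rh :: "nat \<Rightarrow> 'w \<Rightarrow> ('x \<Rightarrow> 'a \<Rightarrow> real)"
  assumes d0: "prob_space d0"
    and pi0_kernel: "pi0 \<in> d0 \<rightarrow>\<^sub>M prob_algebra borel"
    and K: "K \<ge> 2" and eta: "\<eta> > 0"
    and F_meas: "\<forall>R\<in>F. (\<lambda>(x, a). R x a) \<in> borel_measurable (d0 \<Otimes>\<^sub>M borel)"
    and F_compact: "supp_compact d0 pi0 F"
    and F_bounded: "\<forall>R\<in>F. supp_le d0 pi0 R B"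
    and tie: "tie_break_rule d0 pi0 F aR"
    and Rs_in: "Rs \<in> F"
    and loop: "greedy_loop M K \<eta> d0 pi0 F Rs X A Y Rh"
    and eps0: "\<epsilon>0 > 0" and gamma: "\<gamma> > 0"
    and margin: "\<forall>t\<ge>1. \<forall>R\<in>F. gap d0 aR Rs R \<ge> \<epsilon>0 \<longrightarrow>
        (AE \<omega> in M. real_cond_exp M (hist M K d0 X A Y (t - 1))
             (\<lambda>\<omega>. round_loss K X A Y t R \<omega> - round_loss K X A Y t Rs \<omega>) \<omega> \<ge> \<gamma>)"
  shows "let lmax = ln (real K) + 2 * B;
             N\<gamma> = real (covering_number d0 pi0 F (\<gamma> / 32));
             c\<gamma> = \<gamma>\<^sup>2 / (128 * lmax\<^sup>2)
         in (\<forall>t\<ge>1. measure M {\<omega>\<in>space M. gap d0 aR Rs (Rh t \<omega>) \<ge> \<epsilon>0}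
                     \<le> 2 * N\<gamma> * exp (- c\<gamma> * real t))
          \<and> (AE \<omega> in M. finite {t. gap d0 aR Rs (Rh t \<omega>) \<ge> \<epsilon>0})
          \<and> (\<integral>\<^sup>+\<omega>. (\<Sum>t. indicator {\<omega>'. gap d0 aR Rs (Rh t \<omega>') \<ge> \<epsilon>0} \<omega>) \<partial>M)
               \<le> ennreal (1 + real_of_int \<lceil>(1 / c\<gamma>) * ln (2 * N\<gamma>)\<rceil> + 1 / (exp c\<gamma> - 1))"
proof -
  interpret gl M d0 pi0 F aR Rs K \<eta> B \<epsilon>0 \<gamma> X A Y Rh
    by (rule gl.intro[OF assms])
  have l: "ln (real K) + 2 * B = lmax" unfolding lmax_def ..
  have c: "\<gamma>\<^sup>2 / (128 * lmax\<^sup>2) = cg" unfolding cg_def ..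
  show ?thesis
    unfolding Let_def l c using part1 part2 part3 by auto
qed

end
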